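(* Let $n,p\ge1$ be integers, let $\mathbf{A}^{p+1}_{n+1}$ be as defined in the context, let $M=\max\{n+1,p\}$ and $s(x)=M.x^{M}$. Then $s(a)\vee\sim s(a)=\top$ for every $a\in A$, and $\mathrm{Rad}(\mathbf{A}^{p+1}_{n+1})=\{a\in A:s(a)=\top\}$. Consequently the identity $s(x)\vee\neg s(x)\approx\top$ holds in every algebra of the variety generated by $\mathbf{A}^{p+1}_{n+1}$.
   Context: Order $\mathbb{Z}\times\mathbb{Z}$ lexicographically: $(m,r)\preccurlyeq(k,s)$ iff $m<k$, or $m=k$ and $r\le s$; addition/subtraction of pairs is componentwise, and $\min,\max$ of pairs refer to $\preccurlyeq$. For an integer $n\ge1$ let $L^\omega_{n+1}=\{(m,r)\in\mathbb{Z}^2:(0,0)\preccurlyeq(m,r)\preccurlyeq(n,0)\}$ with $x\ast y=\max\{(0,0),x+y-(n,0)\}$ and $x\to y=\min\{(n,0),(n,0)-x+y\}$. For an integer $p\ge1$ let $L_{p+1}=\{0,1,\dots,p\}$ with $\alpha\ast\beta=\max\{0,\alpha+\beta-p\}$. Define $$A=A^{p+1}_{n+1}=\{\langle(m,r),\alpha\rangle:(m,r)\in L^\omega_{n+1},\ \alpha\in\{0,p\}\}\cup\{\langle(m,r),\alpha\rangle:(0,0)\preccurlyeq(m,r)\preccurlyeq(n-1,0),\ 0<\alpha<p\}.$$ Order: $\langle(m,r),\alpha\rangle\le\langle(k,s),\beta\rangle$ iff one of: (o1) $\alpha\neq0$, $\alpha\le\beta$ and $(m,r)\preccurlyeq(k,s)$;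 (o2) $\alpha=\beta=0$ and $(k,s)\preccurlyeq(m,r)$; (o3) $\alpha=0$, $\beta\ne0$ and $(n-1,0)\preccurlyeq(m+k,r+s)$. $\wedge,\vee$ denote meet and join for $\le$. Put $\bot=\langle(n,0),0\rangle$, $\top=\langle(n,0),p\rangle$. For $a=\langle(m,r),\alpha\rangle$, $b=\langle(k,s),\beta\rangle\in A$ define $a\odot b$ by: (P1) if $\alpha,\beta\ge1$ and $\alpha+\beta>p$: $a\odot b=\langle(m,r)\ast(k,s),\alpha+\beta-p\rangle$; (P2) if $\alpha,\beta\ge1$ and $\alpha+\beta\le p$: $a\odot b=\langle\min\{(n,0),(2n-(m+k+1),-(r+s))\},0\rangle$; (P3) if $\alpha\ge1$, $\beta=0$: $a\odot b=\langle(m,r)\to(k,s),0\rangle$, and if $\alpha=0$, $\beta\ge1$: $a\odot b=\langle(k,s)\to(m,r),0\rangle$; (P4) if $\alpha=\beta=0$: $a\odot b=\langle\min\{(n,0),(m+k+1,r+s)\},0\rangle$. Define $\sim\langle(m,r),\alpha\rangle=\langle(m,r),p-\alpha\rangle$ if $\alpha\in\{0,p\}$, and $\sim\langle(m,r),\alpha\rangle=\langle(n-1-m,-r),p-\alpha\rangle$ if $0<\alpha<p$. Define $a\Rightarrow b=\sim(a\odot\sim b)$ (so $\sim a=a\Rightarrow\bot$, interpreting $\neg x=x\to\bot$). The algebra $\mathbf{A}^{p+1}_{n+1}$ is $\langle A;\odot,\Rightarrow,\wedge,\vee,\bot,\top\rangle$, an algebra of type $(2,2,2,2,0,0)$ in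 the language $\langle\ast,\to,\wedge,\vee,\bot,\top\rangle$. Terms: $a^0=\top$, $a^{k+1}=a\odot a^k$; $a\oplus b=\sim(\sim a\odot\sim b)$; $0.a=\bot$, $(k+1).a=a\oplus k.a$. $\mathrm{Rad}$ is the intersection of all maximal proper implicative filters, where an implicative filter is a subset containing $\top$, closed under $\odot$ and upward closed. *)

theory Defs
  imports Main
begin

definition lexle :: "int \<times> int \<Rightarrow> int \<times> int \<Rightarrow> bool" where
  "lexle x y \<longleftrightarrow> fst x < fst y \<or> (fst x = fst y \<and> snd x \<le> snd y)"

definition lexmin :: "int \<times> int \<Rightarrow> int \<times> int \<Rightarrow> int \<times> int" where
  "lexmin x y = (if lexle x y then x else y)"

definition lexmax :: "int \<times> int \<Rightarrow> int \<times> int \<Rightarrow> int \<times> int" where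
  "lexmax x y = (if lexle x y then y else x)"

definition padd :: "int \<times> int \<Rightarrow> int \<times> int \<Rightarrow> int \<times> int" where
  "padd x y = (fst x + fst y, snd x + snd y)"

definition psub :: "int \<times> int \<Rightarrow> int \<times> int \<Rightarrow> int \<times> int" where
  "psub x y = (fst x - fst y, snd x - snd y)"

definition Lomega :: "nat \<Rightarrow> (int \<times> int) set" where
  "Lomega n = {x. lexle (0,0) x \<and> lexle x (int n, 0)}"

definition lstar :: "nat \<Rightarrow> int \<times> int \<Rightarrow> int \<times> int \<Rightarrow> int \<times> int" where
  "lstar n x y = lexmax (0,0) (psub (padd x y) (int n, 0))"

definition limp :: "nat \<Rightarrow> int \<times> int \<Rightarrow> int \<times> int \<Rightarrow> int \<times> int" where
  "limp n x y = lexmin (int n, 0) (padd (psub (int n, 0) x) y)"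

type_synonym elt = "(int \<times> int) \<times> int"

definition Acar :: "nat \<Rightarrow> nat \<Rightarrow> elt set" where
  "Acar n p =
     {(x, \<alpha>). x \<in> Lomega n \<and> (\<alpha> = 0 \<or> \<alpha> = int p)}
   \<union> {(x, \<alpha>). lexle (0,0) x \<and> lexle x (int n - 1, 0) \<and> 0 < \<alpha> \<and> \<alpha> < int p}"

fun Ale :: "nat \<Rightarrow> nat \<Rightarrow> elt \<Rightarrow> elt \<Rightarrow> bool" where
  "Ale n p (x, \<alpha>) (y, \<beta>) \<longleftrightarrow>
     (\<alpha> \<noteq> 0 \<and> \<alpha> \<le> \<beta> \<and> lexle x y)
   \<or> (\<alpha> = 0 \<and> \<beta> = 0 \<and> lexle y x)
   \<or> (\<alpha> = 0 \<and> \<beta> \<noteq> 0 \<and> lexle (int n - 1, 0) (padd x y))"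

definition Ameet :: "nat \<Rightarrow> nat \<Rightarrow> elt \<Rightarrow> elt \<Rightarrow> elt" where
  "Ameet n p a b = (THE c. c \<in> Acar n p \<and> Ale n p c a \<and> Ale n p c b \<and>
      (\<forall>d\<in>Acar n p. Ale n p d a \<and> Ale n p d b \<longrightarrow> Ale n p d c))"

definition Ajoin :: "nat \<Rightarrow> nat \<Rightarrow> elt \<Rightarrow> elt \<Rightarrow> elt" where
  "Ajoin n p a b = (THE c. c \<in> Acar n p \<and> Ale n p a c \<and> Ale n p b c \<and>
      (\<forall>d\<in>Acar n p. Ale n p a d \<and> Ale n p b d \<longrightarrow> Ale n p c d))"

definition Abot :: "nat \<Rightarrow> nat \<Rightarrow> elt" where
  "Abot n p = ((int n, 0), 0)"

definition Atop :: "nat \<Rightarrow> nat \<Rightarrow> elt" where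
  "Atop n p = ((int n, 0), int p)"

fun Amult :: "nat \<Rightarrow> nat \<Rightarrow> elt \<Rightarrow> elt \<Rightarrow> elt" where
  "Amult n p (x, \<alpha>) (y, \<beta>) =
     (if 1 \<le> \<alpha> \<and> 1 \<le> \<beta> \<and> \<alpha> + \<beta> > int p then (lstar n x y, \<alpha> + \<beta> - int p)
      else if 1 \<le> \<alpha> \<and> 1 \<le> \<beta> then
        (lexmin (int n, 0) (2 * int n - (fst x + fst y + 1), - (snd x + snd y)), 0)
      else if 1 \<le> \<alpha> \<and> \<beta> = 0 then (limp n x y, 0)
      else if \<alpha> = 0 \<and> 1 \<le> \<beta> then (limp n y x, 0)
      else (lexmin (int n, 0) (fst x + fst y + 1, snd x + snd y), 0))"

fun Aneg :: "nat \<Rightarrow> nat \<Rightarrow> elt \<Rightarrow> elt" where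
  "Aneg n p (x, \<alpha>) =
     (if \<alpha> = 0 \<or> \<alpha> = int p then (x, int p - \<alpha>)
      else ((int n - 1 - fst x, - snd x), int p - \<alpha>))"

definition Aimp :: "nat \<Rightarrow> nat \<Rightarrow> elt \<Rightarrow> elt \<Rightarrow> elt" where
  "Aimp n p a b = Aneg n p (Amult n p a (Aneg n p b))"

primrec tpow :: "('a \<Rightarrow> 'a \<Rightarrow> 'a) \<Rightarrow> 'a \<Rightarrow> 'a \<Rightarrow> nat \<Rightarrow> 'a" where
  "tpow mult tp a 0 = tp"
| "tpow mult tp a (Suc k) = mult a (tpow mult tp a k)"

definition toplus :: "('a \<Rightarrow> 'a \<Rightarrow> 'a) \<Rightarrow> ('a \<Rightarrow> 'a) \<Rightarrow> 'a \<Rightarrow> 'a \<Rightarrow> 'a" where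
  "toplus mult neg a b = neg (mult (neg a) (neg b))"

primrec ttimes :: "('a \<Rightarrow> 'a \<Rightarrow> 'a) \<Rightarrow> ('a \<Rightarrow> 'a) \<Rightarrow> 'a \<Rightarrow> nat \<Rightarrow> 'a \<Rightarrow> 'a" where
  "ttimes mult neg bt 0 a = bt"
| "ttimes mult neg bt (Suc k) a = toplus mult neg a (ttimes mult neg bt k a)"

definition sterm :: "('a \<Rightarrow> 'a \<Rightarrow> 'a) \<Rightarrow> ('a \<Rightarrow> 'a) \<Rightarrow> 'a \<Rightarrow> 'a \<Rightarrow> nat \<Rightarrow> 'a \<Rightarrow> 'a" where
  "sterm mult neg bt tp M a = ttimes mult neg bt M (tpow mult tp a M)"

definition Mval :: "nat \<Rightarrow> nat \<Rightarrow> nat" where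
  "Mval n p = max (n + 1) p"

definition sA :: "nat \<Rightarrow> nat \<Rightarrow> elt \<Rightarrow> elt" where
  "sA n p a = sterm (Amult n p) (Aneg n p) (Abot n p) (Atop n p) (Mval n p) a"

definition impl_filter :: "nat \<Rightarrow> nat \<Rightarrow> elt set \<Rightarrow> bool" where
  "impl_filter n p F \<longleftrightarrow> F \<subseteq> Acar n p \<and> Atop n p \<in> F
     \<and> (\<forall>a\<in>F. \<forall>b\<in>F. Amult n p a b \<in> F)
     \<and> (\<forall>a\<in>F. \<forall>b\<in>Acar n p. Ale n p a b \<longrightarrow> b \<in> F)"

definition maximal_filter :: "nat \<Rightarrow> nat \<Rightarrow> elt set \<Rightarrow> bool" where
  "maximal_filter n p F \<longleftrightarrow> impl_filter n p F \<and> F \<noteq> Acar n p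
     \<and> (\<forall>G. impl_filter n p G \<and> G \<noteq> Acar n p \<and> F \<subseteq> G \<longrightarrow> G = F)"

definition Rad :: "nat \<Rightarrow> nat \<Rightarrow> elt set" where
  "Rad n p = {a \<in> Acar n p. \<forall>F. maximal_filter n p F \<longrightarrow> a \<in> F}"

record 'a alg =
  acar :: "'a set"
  amul :: "'a \<Rightarrow> 'a \<Rightarrow> 'a"
  aimp :: "'a \<Rightarrow> 'a \<Rightarrow> 'a"
  ameet :: "'a \<Rightarrow> 'a \<Rightarrow> 'a"
  ajoin :: "'a \<Rightarrow> 'a \<Rightarrow> 'a"
  abot :: "'a"
  atop :: "'a"

definition A_alg :: "nat \<Rightarrow> nat \<Rightarrow> elt alg" where
  "A_alg n p = \<lparr> acar = Acar n p, amul = Amult n p, aimp = Aimp n p,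
      ameet = Ameet n p, ajoin = Ajoin n p, abot = Abot n p, atop = Atop n p \<rparr>"

definition pow_alg :: "'i set \<Rightarrow> 'a alg \<Rightarrow> ('i \<Rightarrow> 'a) alg" where
  "pow_alg I B = \<lparr>
     acar = {f. (\<forall>i\<in>I. f i \<in> acar B) \<and> (\<forall>i. i \<notin> I \<longrightarrow> f i = undefined)},
     amul = (\<lambda>f g i. if i \<in> I then amul B (f i) (g i) else undefined),
     aimp = (\<lambda>f g i. if i \<in> I then aimp B (f i) (g i) else undefined),
     ameet = (\<lambda>f g i. if i \<in> I then ameet B (f i) (g i) else undefined),
     ajoin = (\<lambda>f g i. if i \<in> I then ajoin B (f i) (g i) else undefined),
     abot = (\<lambda>i. if i \<in> I then abot B else undefined),
     atop = (\<lambda>i. if i \<in> I then atop B else undefined) \<rparr>"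

definition subuniverse :: "'a set \<Rightarrow> 'a alg \<Rightarrow> bool" where
  "subuniverse C B \<longleftrightarrow> C \<subseteq> acar B \<and> abot B \<in> C \<and> atop B \<in> C
     \<and> (\<forall>x\<in>C. \<forall>y\<in>C. amul B x y \<in> C \<and> aimp B x y \<in> C \<and> ameet B x y \<in> C \<and> ajoin B x y \<in> C)"

definition hom_onto :: "('a \<Rightarrow> 'b) \<Rightarrow> 'a set \<Rightarrow> 'a alg \<Rightarrow> 'b alg \<Rightarrow> bool" where
  "hom_onto h C B D \<longleftrightarrow> h ` C = acar D \<and> h (abot B) = abot D \<and> h (atop B) = atop D
     \<and> (\<forall>x\<in>C. \<forall>y\<in>C. h (amul B x y) = amul D (h x) (h y) \<and> h (aimp B x y) = aimp D (h x) (h y)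
          \<and> h (ameet B x y) = ameet D (h x) (h y) \<and> h (ajoin B x y) = ajoin D (h x) (h y))"

definition HSP_witness :: "'a alg \<Rightarrow> 'i set \<Rightarrow> ('i \<Rightarrow> 'a) set \<Rightarrow> (('i \<Rightarrow> 'a) \<Rightarrow> 'b) \<Rightarrow> 'b alg \<Rightarrow> bool" where
  "HSP_witness B I C h D \<longleftrightarrow> subuniverse C (pow_alg I B) \<and> hom_onto h C (pow_alg I B) D"

text \<open>The identity s(x) \<or> \<not>s(x) = \<top>, with \<not>x = x \<Rightarrow> \<bottom> and \<sim>x = x \<Rightarrow> \<bottom> in the term language.\<close>
definition satisfies_id :: "nat \<Rightarrow> 'b alg \<Rightarrow> bool" where
  "satisfies_id M D \<longleftrightarrow> (\<forall>x\<in>acar D.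
     (let neg = (\<lambda>y. aimp D y (abot D));
          s = sterm (amul D) neg (abot D) (atop D) M x
      in ajoin D s (neg s) = atop D))"

end

theory Submission
  imports Defs
begin


lemmas LD = lexle_def lexmin_def lexmax_def padd_def psub_def lstar_def limp_def
definition J :: "nat \<Rightarrow> nat \<Rightarrow> int \<times> int \<Rightarrow> bool" where
  "J n k z \<longleftrightarrow> lexle z (int n, 0) \<and> (z = (int n, 0) \<or> lexle (int k - 1, 0) z)"

lemma J_P4:
  assumes "lexle (0,0) (a,b)" "J n k (c,d)" "k \<ge> 1"
  shows "\<exists>z'. Amult n p ((a,b),0) ((c,d),0) = (z',0) \<and> J n (Suc k) z'"
proof -
  have "J n (Suc k) (lexmin (int n, 0) (a + c + 1, b + d))"
    using assms unfolding J_def lexmin_def lexle_def by auto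
  then show ?thesis by simp
qed

lemma J_P3:
  assumes "1 \<le> \<alpha>" "lexle (a,b) (int n - 1, 0)" "J n k (c,d)" "k \<ge> 1"
  shows "\<exists>z'. Amult n p ((a,b),\<alpha>) ((c,d),0) = (z',0) \<and> J n (Suc k) z'"
proof -
  have "J n (Suc k) (lexmin (int n, 0) (int n - a + c, - b + d))"
    using assms unfolding J_def lexmin_def lexle_def by auto
  then show ?thesis using assms(1) by (simp add: limp_def padd_def psub_def)
qed

lemma J_final: "J n k (c,d) \<Longrightarrow> k \<ge> n + 1 \<Longrightarrow> (c,d) = (int n, 0)"
  unfolding J_def lexle_def by auto

definition Aph :: "nat \<Rightarrow> nat \<Rightarrow> nat \<Rightarrow> elt \<Rightarrow> bool" where
  "Aph n p k t \<longleftrightarrow> 1 \<le> snd t \<and> snd t \<le> int p - int k \<and> lexle (0,0) (fst t)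
     \<and> (fst t = (0,0) \<or> lexle (fst t) (int n - int k, 0))"

lemma Aph_step:
  assumes "1 \<le> \<alpha>" "\<alpha> < int p" "lexle (0,0) (a,b)" "lexle (a,b) (int n - 1, 0)" "Aph n p k ((c,d),\<beta>)"
  shows "Aph n p (Suc k) (Amult n p ((a,b),\<alpha>) ((c,d),\<beta>)) \<or> (\<exists>z'. Amult n p ((a,b),\<alpha>) ((c,d),\<beta>) = (z',0) \<and> J n (Suc k) z')"
proof (cases "\<alpha> + \<beta> > int p")
  case True
  have "Aph n p (Suc k) (lstar n (a,b) (c,d), \<alpha> + \<beta> - int p)"
    using assms True unfolding Aph_def lstar_def lexmax_def lexle_def padd_def psub_def
    by auto
  then show ?thesis using True assms(1,5) by (simp add: Aph_def)
next
  case False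
  have "J n (Suc k) (lexmin (int n, 0) (2 * int n - (a + c + 1), - (b + d)))"
    using assms False unfolding Aph_def J_def lexmin_def lexle_def by auto
  then show ?thesis using False assms(1,5) by (simp add: Aph_def)
qed


lemma Aneg_invol: "Aneg n p (Aneg n p y) = y"
  by (cases y) auto

lemma ttimes_tpow:
  assumes "\<And>y. neg (neg y) = y"
  shows "ttimes mult neg bt k a = neg (tpow mult (neg bt) (neg a) k)"
  by (induction k) (simp_all add: toplus_def assms)

lemma pow_zero:
  assumes "p \<ge> 1" "lexle (0,0) (a,b)" "lexle (a,b) (int n, 0)"
  shows "\<exists>z. tpow (Amult n p) (Atop n p) ((a,b),0) (Suc k) = (z,0) \<and> J n (Suc k) z"
proof (induction k)
  case 0
  have "Amult n p ((a,b),0) (Atop n p) = ((a,b),0)"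
    using assms by (auto simp: Atop_def LD)
  moreover have "J n 1 (a,b)" using assms by (auto simp: J_def LD)
  ultimately show ?case by simp
next
  case (Suc k)
  then obtain c d where cd: "tpow (Amult n p) (Atop n p) ((a,b),0) (Suc k) = ((c,d),0)" "J n (Suc k) (c,d)"
    by auto
  from J_P4[OF assms(2) cd(2), of p] cd(1) show ?case by simp
qed

lemma pow_mid:
  assumes "1 \<le> \<alpha>" "\<alpha> < int p" "lexle (0,0) (a,b)" "lexle (a,b) (int n - 1, 0)"
  shows "Aph n p (Suc k) (tpow (Amult n p) (Atop n p) ((a,b),\<alpha>) (Suc k))
     \<or> (\<exists>z. tpow (Amult n p) (Atop n p) ((a,b),\<alpha>) (Suc k) = (z,0) \<and> J n (Suc k) z)"
proof (induction k)
  case 0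
  have "Amult n p ((a,b),\<alpha>) (Atop n p) = ((a,b),\<alpha>)"
    using assms by (auto simp: Atop_def LD)
  moreover have "Aph n p 1 ((a,b),\<alpha>)" using assms by (auto simp: Aph_def LD)
  ultimately show ?case by simp
next
  case (Suc k)
  obtain t where tdef: "tpow (Amult n p) (Atop n p) ((a,b),\<alpha>) (Suc k) = t" by simp
  have e: "tpow (Amult n p) (Atop n p) ((a,b),\<alpha>) (Suc (Suc k)) = Amult n p ((a,b),\<alpha>) t"
    using tdef by simp
  from Suc.IH[unfolded tdef] show ?case
  proof
    assume h: "Aph n p (Suc k) t"
    obtain c d \<beta> where t: "t = ((c,d),\<beta>)" by (metis prod.collapse)
    show ?case using Aph_step[OF assms, of "Suc k" c d \<beta>] h unfolding e t by blast
  next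
    assume "\<exists>z. t = (z, 0) \<and> J n (Suc k) z"
    then obtain c d where t: "t = ((c,d),0)" "J n (Suc k) (c,d)" by auto
    show ?case using J_P3[OF assms(1,4) t(2), of p] unfolding e t(1) by simp
  qed
qed


lemma Mval_ge: "Mval n p \<ge> n + 1" "Mval n p \<ge> p" by (auto simp: Mval_def)

lemma Acar_iff: "((x1,x2),\<alpha>) \<in> Acar n p \<longleftrightarrow>
   (lexle (0,0) (x1,x2) \<and> lexle (x1,x2) (int n, 0) \<and> (\<alpha> = 0 \<or> \<alpha> = int p))
   \<or> (lexle (0,0) (x1,x2) \<and> lexle (x1,x2) (int n - 1, 0) \<and> 0 < \<alpha> \<and> \<alpha> < int p)"
  by (auto simp: Acar_def Lomega_def)

lemma pow_bot:
  assumes "p \<ge> 1" "((x1,x2),\<alpha>) \<in> Acar n p" "\<alpha> \<noteq> int p"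
  shows "tpow (Amult n p) (Atop n p) ((x1,x2),\<alpha>) (Mval n p) = Abot n p"
proof -
  obtain k where k: "Mval n p = Suc k" using Mval_ge(1)[where n=n and p=p] by (cases "Mval n p") auto
  have kn: "Suc k \<ge> n + 1" and kp: "Suc k \<ge> p" using Mval_ge[where n=n and p=p] k by auto
  consider (z) "lexle (0,0) (x1,x2)" "lexle (x1,x2) (int n, 0)" "\<alpha> = 0"
    | (m) "lexle (0,0) (x1,x2)" "lexle (x1,x2) (int n - 1, 0)" "0 < \<alpha>" "\<alpha> < int p"
    using assms(2,3) unfolding Acar_iff by blast
  then show ?thesis
  proof cases
    case z
    from pow_zero[OF assms(1) z(1,2), of k] obtain c d where
      cd: "tpow (Amult n p) (Atop n p) ((x1,x2),0) (Suc k) = ((c,d),0)" "J n (Suc k) (c,d)" by auto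
    from J_final[OF cd(2) kn] cd(1) z(3) k show ?thesis by (simp add: Abot_def)
  next
    case m
    have a1: "1 \<le> \<alpha>" using m by simp
    from pow_mid[OF a1 m(4,1,2), of k]
    show ?thesis
    proof
      assume "Aph n p (Suc k) (tpow (Amult n p) (Atop n p) ((x1, x2), \<alpha>) (Suc k))"
      then show ?thesis using kp unfolding Aph_def by simp
    next
      assume "\<exists>z. tpow (Amult n p) (Atop n p) ((x1, x2), \<alpha>) (Suc k) = (z, 0) \<and> J n (Suc k) z"
      then obtain c d where cd: "tpow (Amult n p) (Atop n p) ((x1,x2),\<alpha>) (Suc k) = ((c,d),0)" "J n (Suc k) (c,d)" by auto
      from J_final[OF cd(2) kn] cd(1) k show ?thesis by (simp add: Abot_def)
    qed
  qed
qed

lemma pow_topalpha: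
  assumes "p \<ge> 1" "lexle (0,0) (x1,x2)" "lexle (x1,x2) (int n, 0)"
  shows "\<exists>c d. tpow (Amult n p) (Atop n p) ((x1,x2),int p) k = ((c,d),int p) \<and> lexle (0,0) (c,d) \<and> lexle (c,d) (int n, 0)"
proof (induction k)
  case 0 then show ?case by (auto simp: Atop_def LD)
next
  case (Suc k)
  then obtain c d where cd: "tpow (Amult n p) (Atop n p) ((x1,x2),int p) k = ((c,d),int p)"
     "lexle (0,0) (c,d)" "lexle (c,d) (int n, 0)" by auto
  have "lexle (0,0) (lstar n (x1,x2) (c,d)) \<and> lexle (lstar n (x1,x2) (c,d)) (int n, 0)"
    using assms cd(2,3) unfolding LD by auto
  then show ?case using cd(1) assms(1) by (cases "lstar n (x1,x2) (c,d)") auto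
qed

lemma pow_Atop: "p \<ge> 1 \<Longrightarrow> tpow (Amult n p) (Atop n p) (Atop n p) k = Atop n p"
  by (induction k) (auto simp: Atop_def LD)

lemma Aneg_Abot: "Aneg n p (Abot n p) = Atop n p" by (simp add: Abot_def Atop_def)
lemma Aneg_Atop: "p \<ge> 1 \<Longrightarrow> Aneg n p (Atop n p) = Abot n p" by (simp add: Abot_def Atop_def)

lemma sA_eq: "sA n p a = Aneg n p (tpow (Amult n p) (Atop n p) (Aneg n p (tpow (Amult n p) (Atop n p) a (Mval n p))) (Mval n p))"
  unfolding sA_def sterm_def
  by (subst ttimes_tpow[where neg="Aneg n p"]) (simp_all add: Aneg_invol Aneg_Abot)

lemma sA_val:
  assumes "p \<ge> 1" "a \<in> Acar n p"
  shows "sA n p a = (if snd a = int p then Atop n p else Abot n p)"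
proof -
  obtain x1 x2 \<alpha> where a: "a = ((x1,x2),\<alpha>)" by (metis prod.collapse)
  show ?thesis
  proof (cases "\<alpha> = int p")
    case True
    have l: "lexle (0,0) (x1,x2)" "lexle (x1,x2) (int n, 0)" using assms(2) True unfolding a Acar_iff by auto
    obtain k where k: "Mval n p = Suc k" using Mval_ge(1)[where n=n and p=p] by (cases "Mval n p") auto
    have kn: "Suc k \<ge> n + 1" using Mval_ge[where n=n and p=p] k by auto
    obtain c d where cd: "tpow (Amult n p) (Atop n p) ((x1,x2),int p) (Mval n p) = ((c,d),int p)"
      "lexle (0,0) (c,d)" "lexle (c,d) (int n, 0)" using pow_topalpha[OF assms(1) l] by blast
    have ng: "Aneg n p ((c,d),int p) = ((c,d),0)" by simp
    from pow_zero[OF assms(1) cd(2,3), of k] obtain e f where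
      ef: "tpow (Amult n p) (Atop n p) ((c,d),0) (Suc k) = ((e,f),0)" "J n (Suc k) (e,f)" by auto
    have "(e,f) = (int n, 0)" using J_final[OF ef(2) kn] .
    have "sA n p a = Aneg n p (tpow (Amult n p) (Atop n p) ((c,d),0) (Mval n p))"
      by (simp add: sA_eq a True cd(1))
    also have "\<dots> = Aneg n p (Abot n p)" unfolding k ef(1) using \<open>(e,f) = (int n, 0)\<close> by (simp add: Abot_def)
    finally show ?thesis using Aneg_Abot[of n p] True a by simp
  next
    case False
    show ?thesis using False unfolding sA_eq a
      using pow_bot[OF assms(1) assms(2)[unfolded a] False] Aneg_Abot pow_Atop[OF assms(1)] Aneg_Atop[OF assms(1)]
      by simp
  qed
qed



lemma Acar_iff_old: "((x1,x2),\<alpha>) \<in> Acar n p \<longleftrightarrow>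
   (lexle (0,0) (x1,x2) \<and> lexle (x1,x2) (int n, 0) \<and> (\<alpha> = 0 \<or> \<alpha> = int p))
   \<or> (lexle (0,0) (x1,x2) \<and> lexle (x1,x2) (int n - 1, 0) \<and> 0 < \<alpha> \<and> \<alpha> < int p)"
  by (auto simp: Acar_def Lomega_def)

lemma Acar_iff': "a \<in> Acar n p \<longleftrightarrow>
   (lexle (0,0) (fst a) \<and> lexle (fst a) (int n, 0) \<and> (snd a = 0 \<or> snd a = int p))
   \<or> (lexle (0,0) (fst a) \<and> lexle (fst a) (int n - 1, 0) \<and> 0 < snd a \<and> snd a < int p)"
  by (cases a) (auto simp: Acar_def Lomega_def)

lemma Amult_closed:
  assumes "((a1,a2),\<alpha>) \<in> Acar n p" "((b1,b2),\<beta>) \<in> Acar n p"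
  shows "Amult n p ((a1,a2),\<alpha>) ((b1,b2),\<beta>) \<in> Acar n p"
proof -
  consider (P1) "1 \<le> \<alpha> \<and> 1 \<le> \<beta> \<and> \<alpha> + \<beta> > int p" | (P2) "1 \<le> \<alpha> \<and> 1 \<le> \<beta> \<and> \<not> \<alpha> + \<beta> > int p"
    | (P3) "1 \<le> \<alpha> \<and> \<beta> = 0" | (P3') "\<alpha> = 0 \<and> 1 \<le> \<beta>" | (P4) "\<alpha> = 0 \<and> \<beta> = 0"
    using assms unfolding Acar_iff by linarith
  then show ?thesis
  proof cases
    case P1
    then show ?thesis using assms by (simp add: Acar_iff Acar_iff' LD split: if_splits; linarith)
  next
    case P2
    then show ?thesis using assms by (simp add: Acar_iff Acar_iff' LD split: if_splits; linarith)
  next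
    case P3
    then show ?thesis using assms by (simp add: Acar_iff Acar_iff' LD split: if_splits; linarith)
  next
    case P3'
    then show ?thesis using assms by (simp add: Acar_iff Acar_iff' LD split: if_splits; linarith)
  next
    case P4
    then show ?thesis using assms by (simp add: Acar_iff Acar_iff' LD split: if_splits; linarith)
  qed
qed

lemma Aneg_closed:
  assumes "((a1,a2),\<alpha>) \<in> Acar n p"
  shows "Aneg n p ((a1,a2),\<alpha>) \<in> Acar n p"
  using assms by (simp add: Acar_iff LD; linarith)


lemma Amult_closed': "a \<in> Acar n p \<Longrightarrow> b \<in> Acar n p \<Longrightarrow> Amult n p a b \<in> Acar n p"
  using Amult_closed by (metis prod.collapse)

lemma Aneg_closed': "a \<in> Acar n p \<Longrightarrow> Aneg n p a \<in> Acar n p"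
  using Aneg_closed by (metis prod.collapse)

lemma Atop_in: "Atop n p \<in> Acar n p" by (auto simp: Atop_def Acar_iff LD)
lemma Abot_in: "Abot n p \<in> Acar n p" by (auto simp: Abot_def Acar_iff LD)

lemma Amult_top: "p \<ge> 1 \<Longrightarrow> y \<in> Acar n p \<Longrightarrow> Amult n p y (Atop n p) = y"
  by (cases y) (auto simp: Atop_def Acar_iff' LD)

lemma negA_eq: "p \<ge> 1 \<Longrightarrow> y \<in> Acar n p \<Longrightarrow> Aimp n p y (Abot n p) = Aneg n p y"
  by (simp add: Aimp_def Aneg_Abot Amult_top)

lemma tpow_closed: "a \<in> Acar n p \<Longrightarrow> tpow (Amult n p) (Atop n p) a k \<in> Acar n p"
  by (induction k) (simp_all add: Atop_in Amult_closed')

lemma ttimes_cong: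
  assumes "p \<ge> 1" "a \<in> Acar n p"
  shows "ttimes (Amult n p) (\<lambda>y. Aimp n p y (Abot n p)) (Abot n p) k a = ttimes (Amult n p) (Aneg n p) (Abot n p) k a
     \<and> ttimes (Amult n p) (Aneg n p) (Abot n p) k a \<in> Acar n p"
proof (induction k)
  case 0 then show ?case by (simp add: Abot_in)
next
  case (Suc k)
  let ?t = "ttimes (Amult n p) (Aneg n p) (Abot n p) k a"
  have t: "?t \<in> Acar n p" using Suc by blast
  have m: "Amult n p (Aneg n p a) (Aneg n p ?t) \<in> Acar n p"
    using Amult_closed' Aneg_closed' assms(2) t by blast
  show ?case using Suc t m assms
    by (simp add: toplus_def negA_eq Aneg_closed' Amult_closed')
qed

lemma sterm_negA:
  assumes "p \<ge> 1" "a \<in> Acar n p"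
  shows "sterm (Amult n p) (\<lambda>y. Aimp n p y (Abot n p)) (Abot n p) (Atop n p) M a
      = sterm (Amult n p) (Aneg n p) (Abot n p) (Atop n p) M a"
  unfolding sterm_def using ttimes_cong[OF assms(1) tpow_closed[OF assms(2)]] by blast

lemma Ale_top: "p \<ge> 1 \<Longrightarrow> d \<in> Acar n p \<Longrightarrow> Ale n p d (Atop n p)"
  by (cases d) (auto simp: Atop_def Acar_iff' LD)

lemma Ale_top_eq: "p \<ge> 1 \<Longrightarrow> Ale n p (Atop n p) d \<Longrightarrow> d \<in> Acar n p \<Longrightarrow> d = Atop n p"
  by (cases d) (auto simp: Atop_def Acar_iff' LD)

lemma Ale_bot: "d \<in> Acar n p \<Longrightarrow> Ale n p (Abot n p) d"
  by (cases d) (auto simp: Abot_def Acar_iff' LD)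

lemma Ajoin_top:
  assumes "p \<ge> 1" "a \<in> Acar n p" "b \<in> Acar n p" "a = Atop n p \<or> b = Atop n p"
  shows "Ajoin n p a b = Atop n p"
  unfolding Ajoin_def
proof (rule the_equality)
  show "Atop n p \<in> Acar n p \<and> Ale n p a (Atop n p) \<and> Ale n p b (Atop n p) \<and>
    (\<forall>d\<in>Acar n p. Ale n p a d \<and> Ale n p b d \<longrightarrow> Ale n p (Atop n p) d)"
    using assms Atop_in Ale_top[OF assms(1)] by blast
  show "\<And>c. c \<in> Acar n p \<and> Ale n p a c \<and> Ale n p b c \<and>
         (\<forall>d\<in>Acar n p. Ale n p a d \<and> Ale n p b d \<longrightarrow> Ale n p c d) \<Longrightarrow> c = Atop n p"
    using assms Ale_top_eq by blast
qed

lemma part1: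
  assumes "p \<ge> 1" "a \<in> Acar n p"
  shows "Ajoin n p (sA n p a) (Aneg n p (sA n p a)) = Atop n p"
  using Ajoin_top[OF assms(1)] sA_val[OF assms] Atop_in Abot_in Aneg_Abot Aneg_Atop[OF assms(1)]
  by (cases "snd a = int p") auto

definition RR :: "nat \<Rightarrow> nat \<Rightarrow> elt set" where
  "RR n p = {a \<in> Acar n p. snd a = int p}"

lemma RR_filter: "p \<ge> 1 \<Longrightarrow> impl_filter n p (RR n p)"
  unfolding impl_filter_def RR_def
proof (intro conjI ballI)
  assume p: "p \<ge> 1"
  show "Atop n p \<in> {a \<in> Acar n p. snd a = int p}" using Atop_in by (simp add: Atop_def)
  fix a b assume a: "a \<in> {a \<in> Acar n p. snd a = int p}" and b: "b \<in> {a \<in> Acar n p. snd a = int p}"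
  have "Amult n p a b \<in> Acar n p" using a b Amult_closed' by blast
  moreover have "snd (Amult n p a b) = int p"
  proof -
    obtain x y where "a = (x, int p)" "b = (y, int p)" using a b by (metis (mono_tags, lifting) mem_Collect_eq prod.collapse)
    then show ?thesis using p by (cases x; cases y) simp
  qed
  ultimately show "Amult n p a b \<in> {a \<in> Acar n p. snd a = int p}" by simp
next
  fix a b assume p: "p \<ge> 1" and a: "a \<in> {a \<in> Acar n p. snd a = int p}" and b: "b \<in> Acar n p"
  show "Ale n p a b \<longrightarrow> b \<in> {a \<in> Acar n p. snd a = int p}"
    using a b p by (cases a; cases b) (auto simp: Acar_iff')
qed auto

lemma filter_pow: "impl_filter n p G \<Longrightarrow> b \<in> G \<Longrightarrow> tpow (Amult n p) (Atop n p) b k \<in> G"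
  by (induction k) (auto simp: impl_filter_def)

lemma proper_sub_RR:
  assumes "p \<ge> 1" "impl_filter n p G" "G \<noteq> Acar n p"
  shows "G \<subseteq> RR n p"
proof
  fix b assume b: "b \<in> G"
  have bA: "b \<in> Acar n p" using b assms(2) by (auto simp: impl_filter_def)
  show "b \<in> RR n p"
  proof (rule ccontr)
    assume "b \<notin> RR n p"
    then have ns: "snd b \<noteq> int p" using bA by (simp add: RR_def)
    obtain x1 x2 \<alpha> where bb: "b = ((x1,x2),\<alpha>)" by (metis prod.collapse)
    have "Abot n p \<in> G" using filter_pow[OF assms(2) b, of "Mval n p"] pow_bot[OF assms(1), of x1 x2 \<alpha> n] bA ns bb
      by simp
    then have "Acar n p \<subseteq> G" using assms(2) Ale_bot unfolding impl_filter_def by blast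
    then show False using assms(2,3) unfolding impl_filter_def by blast
  qed
qed

lemma Rad_RR: assumes "p \<ge> 1" shows "Rad n p = RR n p"
proof -
  have "Abot n p \<notin> RR n p" using assms by (simp add: RR_def Abot_def)
  then have prp: "RR n p \<noteq> Acar n p" using Abot_in[of n p] by blast
  have mx: "maximal_filter n p (RR n p)"
    unfolding maximal_filter_def using RR_filter[OF assms] prp proper_sub_RR[OF assms] by blast
  have "\<And>F. maximal_filter n p F \<Longrightarrow> F = RR n p"
  proof -
    fix F assume F: "maximal_filter n p F"
    then have "F \<subseteq> RR n p" using proper_sub_RR[OF assms] unfolding maximal_filter_def by blast
    then show "F = RR n p" using F RR_filter[OF assms] prp unfolding maximal_filter_def by blast
  qed
  then have all: "\<forall>F. maximal_filter n p F \<longrightarrow> F = RR n p" by blast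
  have sub: "RR n p \<subseteq> Acar n p" by (auto simp: RR_def)
  show ?thesis
  proof (rule set_eqI)
    fix a
    have "a \<in> Rad n p \<longleftrightarrow> a \<in> Acar n p \<and> (\<forall>F. maximal_filter n p F \<longrightarrow> a \<in> F)"
      unfolding Rad_def by simp
    also have "\<dots> \<longleftrightarrow> a \<in> Acar n p \<and> a \<in> RR n p" using mx all by metis
    finally show "a \<in> Rad n p \<longleftrightarrow> a \<in> RR n p" using sub by blast
  qed
qed

lemma sA_set: assumes "p \<ge> 1" shows "{a \<in> Acar n p. sA n p a = Atop n p} = RR n p"
  using sA_val[OF assms] assms by (auto simp: RR_def Abot_def Atop_def split: if_splits)



lemma tpow_in: "subuniverse C P \<Longrightarrow> c \<in> C \<Longrightarrow> tpow (amul P) (atop P) c k \<in> C"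
  by (induction k) (auto simp: subuniverse_def)

lemma ttimes_in: "subuniverse C P \<Longrightarrow> c \<in> C \<Longrightarrow> ttimes (amul P) (\<lambda>y. aimp P y (abot P)) (abot P) k c \<in> C"
  by (induction k) (auto simp: subuniverse_def toplus_def)

lemma sterm_in: "subuniverse C P \<Longrightarrow> c \<in> C \<Longrightarrow> sterm (amul P) (\<lambda>y. aimp P y (abot P)) (abot P) (atop P) M c \<in> C"
  unfolding sterm_def by (rule ttimes_in, assumption, rule tpow_in)

lemma h_tpow:
  assumes "subuniverse C P" "hom_onto h C P D" "c \<in> C"
  shows "h (tpow (amul P) (atop P) c k) = tpow (amul D) (atop D) (h c) k"
proof (induction k)
  case 0 then show ?case using assms(2) by (simp add: hom_onto_def)
next
  case (Suc k)
  have "tpow (amul P) (atop P) c k \<in> C" using tpow_in assms(1,3) .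
  then show ?case using Suc assms by (simp add: hom_onto_def)
qed

lemma h_neg:
  assumes "subuniverse C P" "hom_onto h C P D" "y \<in> C"
  shows "h (aimp P y (abot P)) = aimp D (h y) (abot D)"
proof -
  have "abot P \<in> C" using assms(1) by (simp add: subuniverse_def)
  then show ?thesis using assms by (simp add: hom_onto_def)
qed

lemma h_ttimes:
  assumes "subuniverse C P" "hom_onto h C P D" "c \<in> C"
  shows "h (ttimes (amul P) (\<lambda>y. aimp P y (abot P)) (abot P) k c) = ttimes (amul D) (\<lambda>y. aimp D y (abot D)) (abot D) k (h c)"
proof (induction k)
  case 0 then show ?case using assms(2) by (simp add: hom_onto_def)
next
  case (Suc k)
  let ?t = "ttimes (amul P) (\<lambda>y. aimp P y (abot P)) (abot P) k c"
  have t: "?t \<in> C" using ttimes_in assms(1,3) .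
  have nc: "aimp P c (abot P) \<in> C" and nt: "aimp P ?t (abot P) \<in> C"
    using assms(1,3) t by (auto simp: subuniverse_def)
  have m: "amul P (aimp P c (abot P)) (aimp P ?t (abot P)) \<in> C"
    using assms(1) nc nt by (auto simp: subuniverse_def)
  have "h (ttimes (amul P) (\<lambda>y. aimp P y (abot P)) (abot P) (Suc k) c)
      = aimp D (h (amul P (aimp P c (abot P)) (aimp P ?t (abot P)))) (abot D)"
    by (simp add: toplus_def h_neg[OF assms(1,2) m])
  also have "\<dots> = aimp D (amul D (aimp D (h c) (abot D)) (aimp D (h ?t) (abot D))) (abot D)"
    using assms(2) nc nt h_neg[OF assms(1,2) assms(3)] h_neg[OF assms(1,2) t] by (simp add: hom_onto_def)
  finally show ?case using Suc by (simp add: toplus_def)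
qed

lemma h_sterm:
  assumes "subuniverse C P" "hom_onto h C P D" "c \<in> C"
  shows "h (sterm (amul P) (\<lambda>y. aimp P y (abot P)) (abot P) (atop P) M c)
       = sterm (amul D) (\<lambda>y. aimp D y (abot D)) (abot D) (atop D) M (h c)"
  unfolding sterm_def using h_ttimes[OF assms(1,2) tpow_in[OF assms(1,3)]] h_tpow[OF assms] by simp

lemma pw_tpow: "i \<in> I \<Longrightarrow> tpow (amul (pow_alg I B)) (atop (pow_alg I B)) f k i = tpow (amul B) (atop B) (f i) k"
  by (induction k) (simp_all add: pow_alg_def)

lemma pw_ttimes: "i \<in> I \<Longrightarrow> ttimes (amul (pow_alg I B)) (\<lambda>y. aimp (pow_alg I B) y (abot (pow_alg I B))) (abot (pow_alg I B)) k f i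
   = ttimes (amul B) (\<lambda>y. aimp B y (abot B)) (abot B) k (f i)"
  by (induction k) (simp_all add: pow_alg_def toplus_def)

lemma pw_sterm: "i \<in> I \<Longrightarrow> sterm (amul (pow_alg I B)) (\<lambda>y. aimp (pow_alg I B) y (abot (pow_alg I B))) (abot (pow_alg I B)) (atop (pow_alg I B)) M f i
   = sterm (amul B) (\<lambda>y. aimp B y (abot B)) (abot B) (atop B) M (f i)"
  unfolding sterm_def by (simp add: pw_ttimes pw_tpow)

lemma satisfies_from_pointwise:
  assumes W: "HSP_witness B I C h D"
    and pt: "\<And>a. a \<in> acar B \<Longrightarrow> (let s = sterm (amul B) (\<lambda>y. aimp B y (abot B)) (abot B) (atop B) M a
                in ajoin B s (aimp B s (abot B)) = atop B)"
  shows "satisfies_id M D"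
  unfolding satisfies_id_def Let_def
proof
  let ?P = "pow_alg I B"
  have su: "subuniverse C ?P" and ho: "hom_onto h C ?P D" using W by (auto simp: HSP_witness_def)
  fix x assume "x \<in> acar D"
  moreover have "h ` C = acar D" using ho by (simp add: hom_onto_def)
  ultimately obtain c where c: "c \<in> C" "x = h c" by blast
  let ?s = "sterm (amul ?P) (\<lambda>y. aimp ?P y (abot ?P)) (abot ?P) (atop ?P) M c"
  have sC: "?s \<in> C" using sterm_in[OF su c(1)] .
  have nC: "aimp ?P ?s (abot ?P) \<in> C" using su sC by (auto simp: subuniverse_def)
  have cP: "c \<in> acar ?P" using su c(1) by (auto simp: subuniverse_def)
  have key: "ajoin ?P ?s (aimp ?P ?s (abot ?P)) = atop ?P"
  proof
    fix i show "ajoin ?P ?s (aimp ?P ?s (abot ?P)) i = atop ?P i"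
    proof (cases "i \<in> I")
      case True
      have ci: "c i \<in> acar B" using cP True by (simp add: pow_alg_def)
      have "ajoin ?P ?s (aimp ?P ?s (abot ?P)) i = ajoin B (?s i) (aimp B (?s i) (abot B))"
        using True by (simp add: pow_alg_def)
      also have "\<dots> = atop B" using pt[OF ci] by (simp add: Let_def pw_sterm[OF True, of B M c])
      finally show ?thesis using True by (simp add: pow_alg_def)
    next
      case False then show ?thesis by (simp add: pow_alg_def)
    qed
  qed
  have "sterm (amul D) (\<lambda>y. aimp D y (abot D)) (abot D) (atop D) M x = h ?s"
    using h_sterm[OF su ho c(1)] c(2) by simp
  moreover have "aimp D (h ?s) (abot D) = h (aimp ?P ?s (abot ?P))" using h_neg[OF su ho sC] by simp
  moreover have "ajoin D (h ?s) (h (aimp ?P ?s (abot ?P))) = h (ajoin ?P ?s (aimp ?P ?s (abot ?P)))"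
    using ho sC nC by (simp add: hom_onto_def)
  ultimately show "ajoin D (sterm (amul D) (\<lambda>y. aimp D y (abot D)) (abot D) (atop D) M x)
          (aimp D (sterm (amul D) (\<lambda>y. aimp D y (abot D)) (abot D) (atop D) M x) (abot D)) = atop D"
    using key ho by (simp add: hom_onto_def)
qed


theorem corollary3p7:
  fixes n p :: nat
  assumes "n \<ge> 1" and "p \<ge> 1"
  shows "(\<forall>a\<in>Acar n p. Ajoin n p (sA n p a) (Aneg n p (sA n p a)) = Atop n p)
       \<and> Rad n p = {a \<in> Acar n p. sA n p a = Atop n p}
       \<and> (\<forall>(I::'i set) C (h :: ('i \<Rightarrow> elt) \<Rightarrow> 'b) (D :: 'b alg).
            HSP_witness (A_alg n p) I C h D \<longrightarrow> satisfies_id (Mval n p) D)"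
proof (intro conjI ballI allI impI)
  fix a assume "a \<in> Acar n p"
  then show "Ajoin n p (sA n p a) (Aneg n p (sA n p a)) = Atop n p" using part1 assms(2) by blast
next
  show "Rad n p = {a \<in> Acar n p. sA n p a = Atop n p}" using Rad_RR[OF assms(2)] sA_set[OF assms(2)] by simp
next
  fix I :: "'i set" and C and h :: "('i \<Rightarrow> elt) \<Rightarrow> 'b" and D :: "'b alg"
  assume W: "HSP_witness (A_alg n p) I C h D"
  show "satisfies_id (Mval n p) D"
  proof (rule satisfies_from_pointwise[OF W])
    fix a assume "a \<in> acar (A_alg n p)"
    then have a: "a \<in> Acar n p" by (simp add: A_alg_def)
    have s: "sterm (Amult n p) (\<lambda>y. Aimp n p y (Abot n p)) (Abot n p) (Atop n p) (Mval n p) a = sA n p a"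
      using sterm_negA[OF assms(2) a] by (simp add: sA_def)
    have sin: "sA n p a \<in> Acar n p" using sA_val[OF assms(2) a] Atop_in Abot_in by simp
    show "let s = sterm (amul (A_alg n p)) (\<lambda>y. aimp (A_alg n p) y (abot (A_alg n p))) (abot (A_alg n p)) (atop (A_alg n p)) (Mval n p) a
          in ajoin (A_alg n p) s (aimp (A_alg n p) s (abot (A_alg n p))) = atop (A_alg n p)"
      using s negA_eq[OF assms(2) sin] part1[OF assms(2) a] by (simp add: A_alg_def Let_def)
  qed
qed

end
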